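(* Let $M$ be a multiplication $L$-module and $\delta_1(A)=(\sqrt{(A:I_M)})I_M$. Then for every proper element $N\in M$, $N\leqslant\delta_1\big((N:I_M)N\big)$, and equality holds if $N$ is prime.
   Context: $L$ is a multiplicative lattice (complete lattice with commutative, associative multiplication distributing over arbitrary joins, identity $1$), compactly generated, $1$ compact, finite products of compact elements compact; $L_\ast$ = compact elements. An $L$-module is a complete lattice $M$ (least $O_M$, greatest $I_M$) with product $aB\in M$ satisfying $(\bigvee a_\alpha)A=\bigvee(a_\alpha A)$, $a(\bigvee A_\alpha)=\bigvee(aA_\alpha)$, $(ab)A=a(bA)$, $1A=A$, $0A=O_M$. $(A:B)=\bigvee\{x\in L:xB\leqslant A\}$; $\sqrt a=\bigvee\{x\in L_\ast:x^n\leqslant a\text{ for some }n\in\mathbb Z_+\}$. $M$ is a multiplication module if every element of $M$ is $aI_M$ for some $a\in L$. Proper means $<I_M$. A proper $N\in M$ is prime if $aX\leqslant N$ ($a\in L$, $X\in M$) implies $X\leqslant N$ or $aI_M\leqslant N$. *)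

theory Defs
  imports Main
begin

text \<open>Multiplicative lattices: the carrier is a type 'a that is a complete lattice and a
  commutative monoid (multiplication commutative, associative, with identity 1).
  The least element 0 of L is bot.\<close>

definition compact_el :: "'a::complete_lattice \<Rightarrow> bool" where
  "compact_el x \<longleftrightarrow> (\<forall>S. x \<le> Sup S \<longrightarrow> (\<exists>T. finite T \<and> T \<subseteq> S \<and> x \<le> Sup T))"

definition mult_lattice :: "('a::{complete_lattice, comm_monoid_mult}) itself \<Rightarrow> bool" where
  "mult_lattice _ \<longleftrightarrow>
     (\<forall>(a::'a) S. a * Sup S = Sup ((\<lambda>s. a * s) ` S)) \<and>
     (\<forall>(x::'a). x = Sup {c. compact_el c \<and> c \<le> x}) \<and>
     compact_el (1::'a) \<and>
     (\<forall>(a::'a) b. compact_el a \<longrightarrow> compact_el b \<longrightarrow> compact_el (a * b))"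

definition L_module :: "('a::{complete_lattice, comm_monoid_mult} \<Rightarrow> 'm::complete_lattice \<Rightarrow> 'm) \<Rightarrow> bool" where
  "L_module act \<longleftrightarrow>
     (\<forall>S A. act (Sup S) A = Sup ((\<lambda>a. act a A) ` S)) \<and>
     (\<forall>a T. act a (Sup T) = Sup (act a ` T)) \<and>
     (\<forall>a b A. act (a * b) A = act a (act b A)) \<and>
     (\<forall>A. act 1 A = A) \<and>
     (\<forall>A. act bot A = bot)"

definition mcolon :: "('a::{complete_lattice, comm_monoid_mult} \<Rightarrow> 'm::complete_lattice \<Rightarrow> 'm) \<Rightarrow> 'm \<Rightarrow> 'm \<Rightarrow> 'a" where
  "mcolon act A B = Sup {x. act x B \<le> A}"

definition lrad :: "'a::{complete_lattice, comm_monoid_mult} \<Rightarrow> 'a" where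
  "lrad a = Sup {x. compact_el x \<and> (\<exists>n::nat. n \<ge> 1 \<and> x ^ n \<le> a)}"

definition multiplication_module :: "('a::{complete_lattice, comm_monoid_mult} \<Rightarrow> 'm::complete_lattice \<Rightarrow> 'm) \<Rightarrow> bool" where
  "multiplication_module act \<longleftrightarrow> (\<forall>N. \<exists>a. N = act a top)"

definition prime_el :: "('a::{complete_lattice, comm_monoid_mult} \<Rightarrow> 'm::complete_lattice \<Rightarrow> 'm) \<Rightarrow> 'm \<Rightarrow> bool" where
  "prime_el act N \<longleftrightarrow> N < top \<and> (\<forall>a X. act a X \<le> N \<longrightarrow> X \<le> N \<or> act a top \<le> N)"

definition delta1 :: "('a::{complete_lattice, comm_monoid_mult} \<Rightarrow> 'm::complete_lattice \<Rightarrow> 'm) \<Rightarrow> 'm \<Rightarrow> 'm" where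
  "delta1 act A = act (lrad (mcolon act A top)) top"

end

theory Submission
  imports Defs
begin

lemma act_mono1:
  assumes "L_module act" "a \<le> b" shows "act a X \<le> act b X"
proof -
  have "act (Sup {a,b}) X = Sup ((\<lambda>a. act a X) ` {a,b})"
    using assms(1) unfolding L_module_def by blast
  moreover have "Sup {a,b} = b" using assms(2) by (simp add: sup_absorb2)
  ultimately have "act b X = sup (act a X) (act b X)" by simp
  thus ?thesis by (metis sup.cobounded1)
qed

lemma act_mono2:
  assumes "L_module act" "X \<le> Y" shows "act a X \<le> act a Y"
proof -
  have "act a (Sup {X,Y}) = Sup (act a ` {X,Y})"
    using assms(1) unfolding L_module_def by blast
  moreover have "Sup {X,Y} = Y" using assms(2) by (simp add: sup_absorb2)
  ultimately have "act a Y = sup (act a X) (act a Y)" by simp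
  thus ?thesis by (metis sup.cobounded1)
qed

lemma mult_mono_L:
  assumes "mult_lattice TYPE('a::{complete_lattice, comm_monoid_mult})" "(a::'a) \<le> b"
  shows "c * a \<le> c * b"
proof -
  have "c * Sup {a,b} = Sup ((\<lambda>s. c * s) ` {a,b})"
    using assms(1) unfolding mult_lattice_def by blast
  moreover have "Sup {a,b} = b" using assms(2) by (simp add: sup_absorb2)
  ultimately have "c * b = sup (c*a) (c*b)" by simp
  thus ?thesis by (metis sup.cobounded1)
qed

lemma colon_le:
  assumes "L_module act" shows "act (mcolon act A B) B \<le> A"
proof -
  have "act (mcolon act A B) B = Sup ((\<lambda>x. act x B) ` {x. act x B \<le> A})"
    using assms unfolding L_module_def mcolon_def by blast
  also have "\<dots> \<le> A" by (rule Sup_least) auto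
  finally show ?thesis .
qed

lemma colon_ge:
  assumes "act x B \<le> A" shows "x \<le> mcolon act A B"
  using assms unfolding mcolon_def by (auto intro: Sup_upper)

lemma prime_pow:
  assumes "L_module act" "prime_el act N" "n \<ge> 1" "act (x ^ n) top \<le> N"
  shows "act x top \<le> N"
  using assms(3,4)
proof (induction n rule: dec_induct)
  case base then show ?case by simp
next
  case (step n)
  have "act (x * x ^ n) top = act x (act (x^n) top)"
    using assms(1) unfolding L_module_def by blast
  with step.prems have "act x (act (x^n) top) \<le> N" by simp
  then have "act (x^n) top \<le> N \<or> act x top \<le> N"
    using assms(2) unfolding prime_el_def by blast
  then show ?case using step.IH by blast
qed

theorem theorem3p20:
  fixes act :: "'a::{complete_lattice, comm_monoid_mult} \<Rightarrow> 'm::complete_lattice \<Rightarrow> 'm"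
    and N :: 'm
  assumes "mult_lattice TYPE('a)"
    and "L_module act"
    and "multiplication_module act"
    and "N < top"
  shows "N \<le> delta1 act (act (mcolon act N top) N) \<and>
         (prime_el act N \<longrightarrow> N = delta1 act (act (mcolon act N top) N))"
proof -
  define a where "a = mcolon act N top"
  define K where "K = act a N"
  define c where "c = mcolon act K top"
  obtain b where b: "N = act b top" using assms(3) unfolding multiplication_module_def by blast
  have "b \<le> a" unfolding a_def using b by (intro colon_ge) simp
  have aN: "act a top \<le> N" unfolding a_def by (rule colon_le[OF assms(2)])
  have Na: "N = act a top"
    using aN act_mono1[OF assms(2) \<open>b \<le> a\<close>, of top] b by simp
  have mul: "\<And>x y X. act (x * y) X = act x (act y X)"
    using assms(2) unfolding L_module_def by blast
  have K2: "K = act (a*a) top" unfolding K_def using Na mul by simp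
  have "a * a \<le> c" unfolding c_def using K2 by (intro colon_ge) simp
  have "a \<le> lrad c"
  proof -
    have "a = Sup {x. compact_el x \<and> x \<le> a}"
      using assms(1) unfolding mult_lattice_def by blast
    also have "\<dots> \<le> lrad c" unfolding lrad_def
    proof (rule Sup_mono, clarify)
      fix x assume x: "compact_el x" "x \<le> a"
      have "x * x \<le> x * a" by (rule mult_mono_L[OF assms(1) x(2)])
      also have "x * a = a * x" by (simp add: mult.commute)
      also have "a * x \<le> a * a" by (rule mult_mono_L[OF assms(1) x(2)])
      finally have "x ^ 2 \<le> c" using \<open>a * a \<le> c\<close> by (simp add: power2_eq_square)
      then show "\<exists>y\<in>{x. compact_el x \<and> (\<exists>n::nat. n \<ge> 1 \<and> x ^ n \<le> c)}. x \<le> y"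
        using x(1) by (intro bexI[of _ x]) (auto intro!: exI[of _ "2::nat"])
    qed
    finally show ?thesis .
  qed
  have part1: "N \<le> delta1 act K"
    unfolding delta1_def c_def[symmetric] using Na act_mono1[OF assms(2) \<open>a \<le> lrad c\<close>] by simp
  have part2: "delta1 act K \<le> N" if p: "prime_el act N"
  proof -
    have cK: "act c top \<le> K" unfolding c_def by (rule colon_le[OF assms(2)])
    have KN: "K \<le> N" unfolding K_def using act_mono2[OF assms(2), of N top a] aN by simp
    have "act (lrad c) top = Sup ((\<lambda>x. act x top) ` {x. compact_el x \<and> (\<exists>n::nat. n \<ge> 1 \<and> x ^ n \<le> c)})"
      using assms(2) unfolding L_module_def lrad_def by blast
    also have "\<dots> \<le> N"
    proof (rule Sup_least, clarify)
      fix x n assume "compact_el x" "(1::nat) \<le> n" "x ^ n \<le> c"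
      have "act (x^n) top \<le> act c top" by (rule act_mono1[OF assms(2) \<open>x ^ n \<le> c\<close>])
      also have "\<dots> \<le> N" using cK KN by simp
      finally show "act x top \<le> N" using prime_pow[OF assms(2) p \<open>1 \<le> n\<close>] by blast
    qed
    finally show ?thesis unfolding delta1_def c_def .
  qed
  show ?thesis using part1 part2 unfolding a_def[symmetric] K_def[symmetric]
    by (auto intro: order.antisym)
qed

end
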